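(* Let $\mathcal{R}$ be a ring and $(\mathcal{C}^{\bullet},\partial)$ a cochain complex of $\mathcal{R}$-modules with a compatible bigrading $\mathcal{C}^{k}=\bigoplus_{p+q=k}\mathcal{C}^{p,q}$, $\mathcal{C}^{p,q}=\{0\}$ whenever $p<0$ or $q<0$, and $\partial=\partial_{2,-1}+\partial_{1,0}+\partial_{0,1}$ with $\partial_{i,j}(\mathcal{C}^{p,q})\subseteq\mathcal{C}^{p+i,q+j}$. Let $\mathcal{N}:=\ker(\partial_{0,1})\cap\ker(\partial_{2,-1})\subseteq\mathcal{C}$, $\mathcal{N}^{p,q}:=\mathcal{N}\cap\mathcal{C}^{p,q}$ and, for $q\in\mathbb{Z}$, $\mathcal{N}_{q}:=\bigoplus_{p\in\mathbb{Z}}\mathcal{N}^{p-q,q}$ (graded so that $\mathcal{N}^{p-q,q}$ sits in degree $p$). Then the graded $\mathcal{R}$-module $\mathcal{N}$ is a cochain subcomplex of $(\mathcal{C},\partial)$, and for each $q\in\mathbb{Z}$, $\mathcal{N}_{q}$ is also a cochain subcomplex of $(\mathcal{C},\partial)$. *)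

theory Defs
  imports Main
begin

text \<open>Left modules over a (not necessarily commutative) ring 'r, with the module
  living inside an ambient abelian group 'm; scalar multiplication is smul.\<close>

definition lmodule :: "('r::ring_1 \<Rightarrow> 'm::ab_group_add \<Rightarrow> 'm) \<Rightarrow> bool" where
  "lmodule smul \<longleftrightarrow>
     (\<forall>a b x. smul (a + b) x = smul a x + smul b x) \<and>
     (\<forall>a x y. smul a (x + y) = smul a x + smul a y) \<and>
     (\<forall>a b x. smul (a * b) x = smul a (smul b x)) \<and>
     (\<forall>x. smul 1 x = x)"

definition submod :: "('r::ring_1 \<Rightarrow> 'm::ab_group_add \<Rightarrow> 'm) \<Rightarrow> 'm set \<Rightarrow> bool" where
  "submod smul S \<longleftrightarrow> 0 \<in> S \<and> (\<forall>x\<in>S. \<forall>y\<in>S. x + y \<in> S) \<and> (\<forall>a. \<forall>x\<in>S. smul a x \<in> S)"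

definition linear_on :: "('r::ring_1 \<Rightarrow> 'm::ab_group_add \<Rightarrow> 'm) \<Rightarrow> 'm set \<Rightarrow> ('m \<Rightarrow> 'm) \<Rightarrow> bool" where
  "linear_on smul S f \<longleftrightarrow>
     (\<forall>x\<in>S. \<forall>y\<in>S. f (x + y) = f x + f y) \<and> (\<forall>a. \<forall>x\<in>S. f (smul a x) = smul a (f x))"

text \<open>Elements of the bigraded module  C = (+)_{p,q} C^{p,q}  (external direct sum):
  families x p q with x p q \<in> C p q, finitely many nonzero.\<close>
definition bielem :: "(int \<Rightarrow> int \<Rightarrow> 'm::zero set) \<Rightarrow> (int \<Rightarrow> int \<Rightarrow> 'm) \<Rightarrow> bool" where
  "bielem C x \<longleftrightarrow> (\<forall>p q. x p q \<in> C p q) \<and> finite {(p, q). x p q \<noteq> 0}"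

definition Tot :: "(int \<Rightarrow> int \<Rightarrow> 'm::zero set) \<Rightarrow> int \<Rightarrow> (int \<Rightarrow> int \<Rightarrow> 'm) set" where
  "Tot C k = {x. bielem C x \<and> (\<forall>p q. p + q \<noteq> k \<longrightarrow> x p q = 0)}"

definition bzero :: "int \<Rightarrow> int \<Rightarrow> 'm::zero" where "bzero = (\<lambda>p q. 0)"
definition badd :: "(int \<Rightarrow> int \<Rightarrow> 'm::plus) \<Rightarrow> (int \<Rightarrow> int \<Rightarrow> 'm) \<Rightarrow> int \<Rightarrow> int \<Rightarrow> 'm" where
  "badd x y = (\<lambda>p q. x p q + y p q)"
definition bsmul :: "('r \<Rightarrow> 'm \<Rightarrow> 'm) \<Rightarrow> 'r \<Rightarrow> (int \<Rightarrow> int \<Rightarrow> 'm) \<Rightarrow> int \<Rightarrow> int \<Rightarrow> 'm" where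
  "bsmul smul a x = (\<lambda>p q. smul a (x p q))"

definition bsubmod :: "('r::ring_1 \<Rightarrow> 'm::ab_group_add \<Rightarrow> 'm) \<Rightarrow> (int \<Rightarrow> int \<Rightarrow> 'm) set \<Rightarrow> bool" where
  "bsubmod smul S \<longleftrightarrow> bzero \<in> S \<and> (\<forall>x\<in>S. \<forall>y\<in>S. badd x y \<in> S) \<and> (\<forall>a. \<forall>x\<in>S. bsmul smul a x \<in> S)"

text \<open>The operator  \<partial>_{i,j}  on C induced by the component maps d p q : C^{p,q} \<rightarrow> C^{p+i,q+j}.\<close>
definition Dop :: "int \<Rightarrow> int \<Rightarrow> (int \<Rightarrow> int \<Rightarrow> 'm \<Rightarrow> 'm) \<Rightarrow> (int \<Rightarrow> int \<Rightarrow> 'm) \<Rightarrow> int \<Rightarrow> int \<Rightarrow> 'm" where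
  "Dop i j d x = (\<lambda>p q. d (p - i) (q - j) (x (p - i) (q - j)))"

definition Dtot :: "(int \<Rightarrow> int \<Rightarrow> 'm::plus \<Rightarrow> 'm) \<Rightarrow> (int \<Rightarrow> int \<Rightarrow> 'm \<Rightarrow> 'm) \<Rightarrow> (int \<Rightarrow> int \<Rightarrow> 'm \<Rightarrow> 'm)
     \<Rightarrow> (int \<Rightarrow> int \<Rightarrow> 'm) \<Rightarrow> int \<Rightarrow> int \<Rightarrow> 'm" where
  "Dtot d21 d10 d01 x = (\<lambda>p q. Dop 2 (-1) d21 x p q + Dop 1 0 d10 x p q + Dop 0 1 d01 x p q)"

definition cochain_subcomplex ::
  "('r::ring_1 \<Rightarrow> 'm::ab_group_add \<Rightarrow> 'm) \<Rightarrow> (int \<Rightarrow> int \<Rightarrow> 'm set)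
   \<Rightarrow> ((int \<Rightarrow> int \<Rightarrow> 'm) \<Rightarrow> int \<Rightarrow> int \<Rightarrow> 'm) \<Rightarrow> (int \<Rightarrow> (int \<Rightarrow> int \<Rightarrow> 'm) set) \<Rightarrow> bool" where
  "cochain_subcomplex smul C D S \<longleftrightarrow>
     (\<forall>k. S k \<subseteq> Tot C k \<and> bsubmod smul (S k) \<and> D ` S k \<subseteq> S (k + 1))"

definition Ncx :: "(int \<Rightarrow> int \<Rightarrow> 'm::zero set) \<Rightarrow> (int \<Rightarrow> int \<Rightarrow> 'm \<Rightarrow> 'm) \<Rightarrow> (int \<Rightarrow> int \<Rightarrow> 'm \<Rightarrow> 'm)
     \<Rightarrow> int \<Rightarrow> (int \<Rightarrow> int \<Rightarrow> 'm) set" where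
  "Ncx C d21 d01 k = {x \<in> Tot C k. Dop 0 1 d01 x = bzero \<and> Dop 2 (-1) d21 x = bzero}"

definition Nq :: "(int \<Rightarrow> int \<Rightarrow> 'm::zero set) \<Rightarrow> (int \<Rightarrow> int \<Rightarrow> 'm \<Rightarrow> 'm) \<Rightarrow> (int \<Rightarrow> int \<Rightarrow> 'm \<Rightarrow> 'm)
     \<Rightarrow> int \<Rightarrow> int \<Rightarrow> (int \<Rightarrow> int \<Rightarrow> 'm) set" where
  "Nq C d21 d01 q p = {x \<in> Ncx C d21 d01 p. \<forall>a b. (a, b) \<noteq> (p - q, q) \<longrightarrow> x a b = 0}"

end

theory Submission
  imports Defs
begin

lemma lin_zero:
  assumes "linear_on smul S f" "(0::'m::ab_group_add) \<in> S"
  shows "f 0 = 0"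
proof -
  have "f (0 + 0) = f 0 + f 0" using assms unfolding linear_on_def by blast
  thus ?thesis by simp
qed

lemma smul_zero0:
  assumes "lmodule (smul :: 'r::ring_1 \<Rightarrow> 'm::ab_group_add \<Rightarrow> 'm)"
  shows "smul a 0 = 0"
proof -
  have "smul a (0 + 0) = smul a 0 + smul a 0" using assms unfolding lmodule_def by blast
  thus ?thesis by simp
qed

theorem lemma3p1:
  fixes smul :: "'r::ring_1 \<Rightarrow> 'm::ab_group_add \<Rightarrow> 'm"
    and C :: "int \<Rightarrow> int \<Rightarrow> 'm set"
    and d21 d10 d01 :: "int \<Rightarrow> int \<Rightarrow> 'm \<Rightarrow> 'm"
  assumes mod: "lmodule smul"
    and sub: "\<And>p q. submod smul (C p q)"
    and vanish: "\<And>p q. p < 0 \<or> q < 0 \<Longrightarrow> C p q = {0}"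
    and lin21: "\<And>p q. linear_on smul (C p q) (d21 p q)"
    and lin10: "\<And>p q. linear_on smul (C p q) (d10 p q)"
    and lin01: "\<And>p q. linear_on smul (C p q) (d01 p q)"
    and map21: "\<And>p q. d21 p q ` C p q \<subseteq> C (p + 2) (q - 1)"
    and map10: "\<And>p q. d10 p q ` C p q \<subseteq> C (p + 1) q"
    and map01: "\<And>p q. d01 p q ` C p q \<subseteq> C p (q + 1)"
    and dd: "\<And>k x. x \<in> Tot C k \<Longrightarrow> Dtot d21 d10 d01 (Dtot d21 d10 d01 x) = bzero"
  shows "cochain_subcomplex smul C (Dtot d21 d10 d01) (Ncx C d21 d01)
       \<and> (\<forall>q. cochain_subcomplex smul C (Dtot d21 d10 d01) (Nq C d21 d01 q))"
proof -
  have C0: "\<And>p q. 0 \<in> C p q" using sub unfolding submod_def by blast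
  have Cadd: "\<And>p q x y. x \<in> C p q \<Longrightarrow> y \<in> C p q \<Longrightarrow> x + y \<in> C p q"
    using sub unfolding submod_def by blast
  have Csm: "\<And>p q a x. x \<in> C p q \<Longrightarrow> smul a x \<in> C p q"
    using sub unfolding submod_def by blast
  have z21[simp]: "\<And>p q. d21 p q 0 = 0" using lin_zero[OF lin21 C0] .
  have z10[simp]: "\<And>p q. d10 p q 0 = 0" using lin_zero[OF lin10 C0] .
  have z01[simp]: "\<And>p q. d01 p q 0 = 0" using lin_zero[OF lin01 C0] .
  have sz[simp]: "\<And>a. smul a 0 = 0" using smul_zero0[OF mod] .
  define D where "D = Dtot d21 d10 d01"
  have key: "d01 (a+1) b (d10 a b v) + d10 a (b+1) (d01 a b v) = 0
           \<and> d21 (a+1) b (d10 a b v) + d10 (a+2) (b-1) (d21 a b v) = 0"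
    if v: "v \<in> C a b" for a b v
  proof -
    define y where "y = (\<lambda>p q. if p = a \<and> q = b then v else 0)"
    have "{(p, q). y p q \<noteq> 0} \<subseteq> {(a,b)}" by (auto simp: y_def split: if_splits)
    hence fin: "finite {(p, q). y p q \<noteq> 0}" by (rule finite_subset) simp
    have "y \<in> Tot C (a+b)" using fin v C0 unfolding Tot_def bielem_def y_def by auto
    hence "D (D y) = bzero" using dd unfolding D_def by blast
    hence e1: "D (D y) (a+1) (b+1) = 0" and e2: "D (D y) (a+3) (b-1) = 0"
      unfolding bzero_def by metis+
    from e1 have 1: "d01 (a+1) b (d10 a b v) + d10 a (b+1) (d01 a b v) = 0"
      by (simp add: D_def Dtot_def Dop_def y_def add.commute)
    from e2 have 2: "d21 (a+1) b (d10 a b v) + d10 (a+2) (b-1) (d21 a b v) = 0"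
      by (simp add: D_def Dtot_def Dop_def y_def add.commute)
    show ?thesis using 1 2 by blast
  qed

  have TotD: "x \<in> Tot C k \<Longrightarrow> x p q \<in> C p q" for x k p q
    unfolding Tot_def bielem_def by blast
  have Dx: "D x p q = d21 (p-2) (q+1) (x (p-2) (q+1)) + d10 (p-1) q (x (p-1) q) + d01 p (q-1) (x p (q-1))" for x p q
    by (simp add: D_def Dtot_def Dop_def)
  have DTot: "D x \<in> Tot C (k+1)" if x: "x \<in> Tot C k" for x k
  proof -
    let ?S = "{(p, q). x p q \<noteq> 0}"
    have fin: "finite ?S" using x unfolding Tot_def bielem_def by blast
    have "{(p, q). D x p q \<noteq> 0} \<subseteq> (\<lambda>(p,q). (p+2,q-1)) ` ?S \<union> (\<lambda>(p,q). (p+1,q)) ` ?S \<union> (\<lambda>(p,q). (p,q+1)) ` ?S"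
    proof
      fix z assume "z \<in> {(p, q). D x p q \<noteq> 0}"
      then obtain p q where z: "z = (p,q)" and nz: "D x p q \<noteq> 0" by blast
      have "x (p-2) (q+1) \<noteq> 0 \<or> x (p-1) q \<noteq> 0 \<or> x p (q-1) \<noteq> 0"
        using nz by (auto simp: Dx)
      thus "z \<in> (\<lambda>(p,q). (p+2,q-1)) ` ?S \<union> (\<lambda>(p,q). (p+1,q)) ` ?S \<union> (\<lambda>(p,q). (p,q+1)) ` ?S"
      proof (elim disjE)
        assume "x (p-2) (q+1) \<noteq> 0"
        hence "(p-2, q+1) \<in> ?S" by simp
        hence "(\<lambda>(p,q). (p+2,q-1)) (p-2, q+1) \<in> (\<lambda>(p,q). (p+2,q-1)) ` ?S" by (rule imageI)
        thus ?thesis unfolding z by simp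
      next
        assume "x (p-1) q \<noteq> 0"
        hence "(p-1, q) \<in> ?S" by simp
        hence "(\<lambda>(p,q). (p+1,q)) (p-1, q) \<in> (\<lambda>(p,q). (p+1,q)) ` ?S" by (rule imageI)
        thus ?thesis unfolding z by simp
      next
        assume "x p (q-1) \<noteq> 0"
        hence "(p, q-1) \<in> ?S" by simp
        hence "(\<lambda>(p,q). (p,q+1)) (p, q-1) \<in> (\<lambda>(p,q). (p,q+1)) ` ?S" by (rule imageI)
        thus ?thesis unfolding z by simp
      qed
    qed
    hence f2: "finite {(p, q). D x p q \<noteq> 0}" by (rule finite_subset) (simp add: fin)
    have inC: "D x p q \<in> C p q" for p q
    proof -
      have a: "d21 (p-2) (q+1) (x (p-2) (q+1)) \<in> C p q"
        using map21[of "p-2" "q+1"] TotD[OF x] by force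
      have b: "d10 (p-1) q (x (p-1) q) \<in> C p q"
        using map10[of "p-1" q] TotD[OF x] by force
      have c: "d01 p (q-1) (x p (q-1)) \<in> C p q"
        using map01[of p "q-1"] TotD[OF x] by force
      show ?thesis unfolding Dx using a b c Cadd by blast
    qed
    have deg: "D x p q = 0" if "p + q \<noteq> k + 1" for p q
    proof -
      have "x (p-2) (q+1) = 0" "x (p-1) q = 0" "x p (q-1) = 0"
        using x that unfolding Tot_def by auto
      thus ?thesis by (simp add: Dx)
    qed
    show ?thesis unfolding Tot_def bielem_def using f2 inC deg by blast
  qed
  have Dopz: "Dop i j d bzero = bzero" if "\<And>p q. d p q 0 = 0" for i j and d :: "int \<Rightarrow> int \<Rightarrow> 'm \<Rightarrow> 'm"
    using that by (simp add: Dop_def bzero_def)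
  have Dopadd: "Dop i j d (badd x y) = badd (Dop i j d x) (Dop i j d y)"
    if "\<And>p q. linear_on smul (C p q) (d p q)" "bielem C x" "bielem C y" for i j d x y
    using that unfolding Dop_def badd_def linear_on_def bielem_def by (auto intro!: ext)
  have Dopsm: "Dop i j d (bsmul smul a x) = bsmul smul a (Dop i j d x)"
    if "\<And>p q. linear_on smul (C p q) (d p q)" "bielem C x" for i j d x a
    using that unfolding Dop_def bsmul_def linear_on_def bielem_def by (auto intro!: ext)
  have Totsub: "bsubmod smul (Tot C k)" for k
  proof -
    have "bzero \<in> Tot C k" unfolding Tot_def bielem_def bzero_def using C0 by simp
    moreover have "badd x y \<in> Tot C k" if "x \<in> Tot C k" "y \<in> Tot C k" for x y
    proof -
      have "{(p, q). badd x y p q \<noteq> 0} \<subseteq> {(p, q). x p q \<noteq> 0} \<union> {(p, q). y p q \<noteq> 0}"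
        by (auto simp: badd_def)
      moreover have "finite ({(p, q). x p q \<noteq> 0} \<union> {(p, q). y p q \<noteq> 0})"
        using that unfolding Tot_def bielem_def by blast
      ultimately have "finite {(p, q). badd x y p q \<noteq> 0}" by (rule finite_subset)
      thus ?thesis using that Cadd unfolding Tot_def bielem_def badd_def by auto
    qed
    moreover have "bsmul smul a x \<in> Tot C k" if "x \<in> Tot C k" for x a
    proof -
      have "{(p, q). bsmul smul a x p q \<noteq> 0} \<subseteq> {(p, q). x p q \<noteq> 0}"
        by (auto simp: bsmul_def)
      moreover have "finite {(p, q). x p q \<noteq> 0}"
        using that unfolding Tot_def bielem_def by blast
      ultimately have "finite {(p, q). bsmul smul a x p q \<noteq> 0}" by (rule finite_subset)
      thus ?thesis using that Csm unfolding Tot_def bielem_def bsmul_def by auto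
    qed
    ultimately show ?thesis unfolding bsubmod_def by blast
  qed
  have TotB: "x \<in> Tot C k \<Longrightarrow> bielem C x" for x k unfolding Tot_def by blast
  have Nsub: "bsubmod smul (Ncx C d21 d01 k)" for k
  proof -
    have "bzero \<in> Ncx C d21 d01 k" using Totsub[of k] Dopz[of d01] Dopz[of d21]
      unfolding Ncx_def bsubmod_def by simp
    moreover have "badd x y \<in> Ncx C d21 d01 k" if "x \<in> Ncx C d21 d01 k" "y \<in> Ncx C d21 d01 k" for x y
      using that Totsub[of k] Dopadd[OF lin01, of x y] Dopadd[OF lin21, of x y] TotB
      unfolding Ncx_def bsubmod_def by (auto simp: badd_def bzero_def)
    moreover have "bsmul smul a x \<in> Ncx C d21 d01 k" if "x \<in> Ncx C d21 d01 k" for x a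
      using that Totsub[of k] Dopsm[OF lin01, of x] Dopsm[OF lin21, of x] TotB
      unfolding Ncx_def bsubmod_def by (auto simp: bsmul_def bzero_def)
    ultimately show ?thesis unfolding bsubmod_def by blast
  qed
  have NDx: "D x p q = d10 (p-1) q (x (p-1) q)" if "x \<in> Ncx C d21 d01 k" for x k p q
  proof -
    have "Dop 0 1 d01 x p (q-1+1) = 0" "Dop 2 (-1) d21 x p (q+1-1) = 0"
      using that unfolding Ncx_def bzero_def by auto
    thus ?thesis by (simp add: Dx Dop_def)
  qed
  have ND: "D x \<in> Ncx C d21 d01 (k+1)" if x: "x \<in> Ncx C d21 d01 k" for x k
  proof -
    have xT: "x \<in> Tot C k" using x unfolding Ncx_def by blast
    have k01: "d01 a b (x a b) = 0" for a b
    proof -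
      have "Dop 0 1 d01 x a (b+1) = 0" using x unfolding Ncx_def bzero_def by auto
      thus ?thesis by (simp add: Dop_def)
    qed
    have k21: "d21 a b (x a b) = 0" for a b
    proof -
      have "Dop 2 (-1) d21 x (a+2) (b-1) = 0" using x unfolding Ncx_def bzero_def by auto
      thus ?thesis by (simp add: Dop_def)
    qed
    have A: "Dop 0 1 d01 (D x) = bzero"
    proof (intro ext)
      fix p q :: int
      obtain a b where ab: "p = a + 1" "q = b + 1" proof (rule that[of "p-1" "q-1"]) qed simp_all
      have "Dop 0 1 d01 (D x) p q = d01 (a+1) b (d10 a b (x a b))"
        by (simp add: Dop_def NDx[OF x] ab)
      also have "\<dots> = - d10 a (b+1) (d01 a b (x a b))"
        using key[OF TotD[OF xT]] by (simp add: eq_neg_iff_add_eq_0)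
      also have "\<dots> = 0" by (simp add: k01)
      finally show "Dop 0 1 d01 (D x) p q = bzero p q" by (simp add: bzero_def)
    qed
    have B: "Dop 2 (-1) d21 (D x) = bzero"
    proof (intro ext)
      fix p q :: int
      obtain a b where ab: "p = a + 3" "q = b - 1" proof (rule that[of "p-3" "q+1"]) qed simp_all
      have "Dop 2 (-1) d21 (D x) p q = d21 (a+1) b (d10 a b (x a b))"
        by (simp add: Dop_def NDx[OF x] ab add.commute)
      also have "\<dots> = - d10 (a+2) (b-1) (d21 a b (x a b))"
        using key[OF TotD[OF xT]] by (simp add: eq_neg_iff_add_eq_0)
      also have "\<dots> = 0" by (simp add: k21)
      finally show "Dop 2 (-1) d21 (D x) p q = bzero p q" by (simp add: bzero_def)
    qed
    show ?thesis unfolding Ncx_def using DTot[OF xT] A B by blast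
  qed
  have part1: "cochain_subcomplex smul C D (Ncx C d21 d01)"
    unfolding cochain_subcomplex_def using Nsub ND by (auto simp: Ncx_def)
  have part2: "cochain_subcomplex smul C D (Nq C d21 d01 q)" for q
  proof -
    have "Nq C d21 d01 q k \<subseteq> Tot C k" for k unfolding Nq_def Ncx_def by blast
    moreover have "bsubmod smul (Nq C d21 d01 q k)" for k
      using Nsub[of k] unfolding bsubmod_def Nq_def
      by (auto simp: bzero_def badd_def bsmul_def)
    moreover have "D ` Nq C d21 d01 q k \<subseteq> Nq C d21 d01 q (k+1)" for k
    proof
      fix z assume "z \<in> D ` Nq C d21 d01 q k"
      then obtain x where x: "x \<in> Nq C d21 d01 q k" and z: "z = D x" by blast
      have xN: "x \<in> Ncx C d21 d01 k" using x unfolding Nq_def by blast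
      have "D x a b = 0" if "(a, b) \<noteq> (k + 1 - q, q)" for a b
      proof -
        have "(a-1, b) \<noteq> (k - q, q)" using that by auto
        hence "x (a-1) b = 0" using x unfolding Nq_def by blast
        thus ?thesis by (simp add: NDx[OF xN])
      qed
      thus "z \<in> Nq C d21 d01 q (k+1)" unfolding z Nq_def using ND[OF xN] by blast
    qed
    ultimately show ?thesis unfolding cochain_subcomplex_def by blast
  qed
  show ?thesis using part1 part2 unfolding D_def by blast
qed

end
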